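(* Let $\Gamma$ be a presheaf on $\mathbb{T}$, let $X$ be a family over $\Gamma$, let $\varphi$ be a predicate over $(\Gamma.X)\times\mathrm{Clk}$, and let $n:\Gamma\to\mathbb{N}$ be a morphism of presheaves into the constant presheaf $\mathbb{N}$. Suppose that for all $(\mathcal{E},\vartheta)$, $\gamma\in\Gamma(\mathcal{E},\vartheta)$, $x,y\in X(\mathcal{E},\vartheta,\gamma)$ and $\lambda\in\mathcal{E}$, if $\star\in\varphi(\mathcal{E},\vartheta,\gamma,x,\lambda)$ and $\star\in\varphi(\mathcal{E},\vartheta,\gamma,y,\lambda)$ then $x=y$ or $\vartheta(\lambda)<n(\gamma)$ (this is the interpretation in the model of "$\varphi(x,\kappa)\wedge\varphi(y,\kappa)$ implies $(\triangleright^\kappa)^{n}(x=y)$"). Then for every $(\mathcal{E},\vartheta)$ and $\gamma\in\Gamma(\mathcal{E},\vartheta)$ the following are equivalent: (A) there exists $x\in X(\mathcal{E},\vartheta,\gamma)$ such that for all $\alpha<\rho$, $\star\in\varphi(\mathcal{E}\cup\{\lambda_\mathcal{E}\},\vartheta[\lambda_\mathcal{E}\mapsto\alpha],\iota\cdot\gamma,\iota\cdot x,\lambda_\mathcal{E})$; (B) for all $\alpha<\rho$ there exists $x\in X(\mathcal{E}\cup\{\lambda_\mathcal{E}\},\vartheta[\lambda_\mathcal{E}\mapsto\alpha],\iota\cdot\gamma)$ such that $\star\in\varphi(\mathcal{E}\cup\{\lambda_\mathcal{E}\},\vartheta[\lambda_\mathcal{E}\mapsto\alpha],\iota\cdot\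gamma,x,\lambda_\mathcal{E})$.
   Context: Fix a limit ordinal $\rho$ and a countably infinite set of clock names. The category $\mathbb{T}$ has objects pairs $(\mathcal{E},\vartheta)$ with $\mathcal{E}$ a finite set of clock names and $\vartheta:\mathcal{E}\to\rho$; a morphism $(\mathcal{E},\vartheta)\to(\mathcal{E}',\vartheta')$ is a function $\sigma:\mathcal{E}\to\mathcal{E}'$ with $\vartheta'\circ\sigma\le\vartheta$ pointwise. A presheaf on $\mathbb{T}$ is a covariant functor $\mathbb{T}\to\mathsf{Set}$; write $\sigma\cdot x$ for the action of $\sigma$. $\mathrm{Clk}$ is the presheaf $\mathrm{Clk}(\mathcal{E},\vartheta)=\mathcal{E}$ with $\sigma\cdot\lambda=\sigma(\lambda)$. For a presheaf $\Gamma$, $\int\Gamma$ is its category of elements, with objects $(\mathcal{E},\vartheta,\gamma)$; a presheaf $X$ over $\int\Gamma$ is a covariant functor $\int\Gamma\to\mathsf{Set}$ with fibres $X(\mathcal{E},\vartheta,\gamma)$ and maps $\sigma\cdot(-)$. $X$ is invariant under clock introduction if for all $(\mathcal{E},\vartheta)$, $\gamma$, clock names $\lambda\notin\mathcal{E}$ and $\alpha<\rho$, the map $\iota\cdot(-): X(\mathcal{E},\vartheta,\gamma)\to X(\mathcal{E}\cup\{\lambda\},\vartheta[\lambda\mapsto\alpha],\iota\cdot\gamma)$ induced by the inclusion $\iota:\mathcal{E}\to\mathcal{E}\cup\{\lambda\}$ is a bijection. A family over $\Gamma$ is a presheaf over $\int\Gamma$ invariant under clock introduction; a predicate is a family all of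 whose fibres are subsets of $\{\star\}$. The comprehension $\Gamma.X$ is the presheaf $(\Gamma.X)(\mathcal{E},\vartheta)=\{(\gamma,x)\mid\gamma\in\Gamma(\mathcal{E},\vartheta), x\in X(\mathcal{E},\vartheta,\gamma)\}$; thus a predicate $\varphi$ over $(\Gamma.X)\times\mathrm{Clk}$ has fibres $\varphi(\mathcal{E},\vartheta,\gamma,x,\lambda)\subseteq\{\star\}$ for $\lambda\in\mathcal{E}$. A function assigning to each finite set $\mathcal{E}$ of clock names a clock name $\lambda_\mathcal{E}\notin\mathcal{E}$ is fixed, and $\iota$ denotes the inclusion $\mathcal{E}\to\mathcal{E}\cup\{\lambda_\mathcal{E}\}$, viewed as a morphism $(\mathcal{E},\vartheta)\to(\mathcal{E}\cup\{\lambda_\mathcal{E}\},\vartheta[\lambda_\mathcal{E}\mapsto\alpha])$. *)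

theory Defs
  imports Main "HOL-Library.Countable"
begin

text \<open>Ordinals below the limit ordinal rho are modelled by a type 'o of class
  {wellorder, no_top} (a nonempty well-order without greatest element, i.e. a limit
  ordinal). Objects (E, theta) of the category T are finite partial maps
  theta :: 'c \<rightharpoonup> 'o with E = dom theta. Morphisms are functions
  sigma :: 'c \<Rightarrow> 'c, considered only on dom theta.\<close>

definition obj :: "('c \<rightharpoonup> 'o) \<Rightarrow> bool" where
  "obj \<theta> \<longleftrightarrow> finite (dom \<theta>)"

definition mor :: "('c \<rightharpoonup> 'o::order) \<Rightarrow> ('c \<rightharpoonup> 'o) \<Rightarrow> ('c \<Rightarrow> 'c) \<Rightarrow> bool" where
  "mor \<theta> \<theta>' \<sigma> \<longleftrightarrow> obj \<theta> \<and> obj \<theta>' \<and>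
     (\<forall>c\<in>dom \<theta>. \<sigma> c \<in> dom \<theta>' \<and> the (\<theta>' (\<sigma> c)) \<le> the (\<theta> c))"

definition presheaf ::
  "(('c \<rightharpoonup> 'o::order) \<Rightarrow> 'g set) \<Rightarrow> (('c \<rightharpoonup> 'o) \<Rightarrow> ('c \<rightharpoonup> 'o) \<Rightarrow> ('c \<Rightarrow> 'c) \<Rightarrow> 'g \<Rightarrow> 'g) \<Rightarrow> bool" where
  "presheaf G act \<longleftrightarrow>
     (\<forall>\<theta> \<theta>' \<sigma> g. mor \<theta> \<theta>' \<sigma> \<longrightarrow> g \<in> G \<theta> \<longrightarrow> act \<theta> \<theta>' \<sigma> g \<in> G \<theta>') \<and>
     (\<forall>\<theta> g. obj \<theta> \<longrightarrow> g \<in> G \<theta> \<longrightarrow> act \<theta> \<theta> id g = g) \<and>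
     (\<forall>\<theta> \<theta>' \<theta>'' \<sigma> \<tau> g. mor \<theta> \<theta>' \<sigma> \<longrightarrow> mor \<theta>' \<theta>'' \<tau> \<longrightarrow> g \<in> G \<theta> \<longrightarrow>
        act \<theta> \<theta>'' (\<tau> \<circ> \<sigma>) g = act \<theta>' \<theta>'' \<tau> (act \<theta> \<theta>' \<sigma> g)) \<and>
     (\<forall>\<theta> \<theta>' \<sigma> \<sigma>' g. mor \<theta> \<theta>' \<sigma> \<longrightarrow> (\<forall>c\<in>dom \<theta>. \<sigma> c = \<sigma>' c) \<longrightarrow> g \<in> G \<theta> \<longrightarrow>
        act \<theta> \<theta>' \<sigma> g = act \<theta> \<theta>' \<sigma>' g)"

text \<open>Covariant presheaf over the category of elements of (G, act):
  fibres X theta g, action xact theta theta' sigma g.\<close>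
definition presheaf_over ::
  "(('c \<rightharpoonup> 'o::order) \<Rightarrow> 'g set) \<Rightarrow> (('c \<rightharpoonup> 'o) \<Rightarrow> ('c \<rightharpoonup> 'o) \<Rightarrow> ('c \<Rightarrow> 'c) \<Rightarrow> 'g \<Rightarrow> 'g)
   \<Rightarrow> (('c \<rightharpoonup> 'o) \<Rightarrow> 'g \<Rightarrow> 'x set)
   \<Rightarrow> (('c \<rightharpoonup> 'o) \<Rightarrow> ('c \<rightharpoonup> 'o) \<Rightarrow> ('c \<Rightarrow> 'c) \<Rightarrow> 'g \<Rightarrow> 'x \<Rightarrow> 'x) \<Rightarrow> bool" where
  "presheaf_over G act X xact \<longleftrightarrow>
     (\<forall>\<theta> \<theta>' \<sigma> g x. mor \<theta> \<theta>' \<sigma> \<longrightarrow> g \<in> G \<theta> \<longrightarrow> x \<in> X \<theta> g \<longrightarrow>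
        xact \<theta> \<theta>' \<sigma> g x \<in> X \<theta>' (act \<theta> \<theta>' \<sigma> g)) \<and>
     (\<forall>\<theta> g x. obj \<theta> \<longrightarrow> g \<in> G \<theta> \<longrightarrow> x \<in> X \<theta> g \<longrightarrow> xact \<theta> \<theta> id g x = x) \<and>
     (\<forall>\<theta> \<theta>' \<theta>'' \<sigma> \<tau> g x. mor \<theta> \<theta>' \<sigma> \<longrightarrow> mor \<theta>' \<theta>'' \<tau> \<longrightarrow> g \<in> G \<theta> \<longrightarrow> x \<in> X \<theta> g \<longrightarrow>
        xact \<theta> \<theta>'' (\<tau> \<circ> \<sigma>) g x = xact \<theta>' \<theta>'' \<tau> (act \<theta> \<theta>' \<sigma> g) (xact \<theta> \<theta>' \<sigma> g x)) \<and>
     (\<forall>\<theta> \<theta>' \<sigma> \<sigma>' g x. mor \<theta> \<theta>' \<sigma> \<longrightarrow> (\<forall>c\<in>dom \<theta>. \<sigma> c = \<sigma>' c) \<longrightarrow> g \<in> G \<theta> \<longrightarrow> x \<in> X \<theta> g \<longrightarrow>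
        xact \<theta> \<theta>' \<sigma> g x = xact \<theta> \<theta>' \<sigma>' g x)"

text \<open>Invariance under clock introduction (the inclusion E \<rightarrow> E \<union> {l} is id).\<close>
definition clock_invariant ::
  "(('c \<rightharpoonup> 'o::order) \<Rightarrow> 'g set) \<Rightarrow> (('c \<rightharpoonup> 'o) \<Rightarrow> ('c \<rightharpoonup> 'o) \<Rightarrow> ('c \<Rightarrow> 'c) \<Rightarrow> 'g \<Rightarrow> 'g)
   \<Rightarrow> (('c \<rightharpoonup> 'o) \<Rightarrow> 'g \<Rightarrow> 'x set)
   \<Rightarrow> (('c \<rightharpoonup> 'o) \<Rightarrow> ('c \<rightharpoonup> 'o) \<Rightarrow> ('c \<Rightarrow> 'c) \<Rightarrow> 'g \<Rightarrow> 'x \<Rightarrow> 'x) \<Rightarrow> bool" where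
  "clock_invariant G act X xact \<longleftrightarrow>
     (\<forall>\<theta> g l \<alpha>. obj \<theta> \<longrightarrow> g \<in> G \<theta> \<longrightarrow> l \<notin> dom \<theta> \<longrightarrow>
        bij_betw (xact \<theta> (\<theta>(l \<mapsto> \<alpha>)) id g) (X \<theta> g) (X (\<theta>(l \<mapsto> \<alpha>)) (act \<theta> (\<theta>(l \<mapsto> \<alpha>)) id g)))"

definition family where
  "family G act X xact \<longleftrightarrow> presheaf_over G act X xact \<and> clock_invariant G act X xact"

text \<open>A predicate: a family all of whose fibres are subsets of the singleton {()}
  (the type unit); the action on such fibres is necessarily the unique map.\<close>
definition predicate ::
  "(('c \<rightharpoonup> 'o::order) \<Rightarrow> 'g set) \<Rightarrow> (('c \<rightharpoonup> 'o) \<Rightarrow> ('c \<rightharpoonup> 'o) \<Rightarrow> ('c \<Rightarrow> 'c) \<Rightarrow> 'g \<Rightarrow> 'g)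
   \<Rightarrow> (('c \<rightharpoonup> 'o) \<Rightarrow> 'g \<Rightarrow> unit set) \<Rightarrow> bool" where
  "predicate G act P \<longleftrightarrow> family G act P (\<lambda>_ _ _ _ _. ())"

definition compr :: "(('c \<rightharpoonup> 'o) \<Rightarrow> 'g set) \<Rightarrow> (('c \<rightharpoonup> 'o) \<Rightarrow> 'g \<Rightarrow> 'x set) \<Rightarrow> ('c \<rightharpoonup> 'o) \<Rightarrow> ('g \<times> 'x) set" where
  "compr G X \<theta> = {(g, x). g \<in> G \<theta> \<and> x \<in> X \<theta> g}"

definition compr_act where
  "compr_act act xact \<theta> \<theta>' \<sigma> gx = (act \<theta> \<theta>' \<sigma> (fst gx), xact \<theta> \<theta>' \<sigma> (fst gx) (snd gx))"

definition Clk :: "('c \<rightharpoonup> 'o) \<Rightarrow> 'c set" where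
  "Clk \<theta> = dom \<theta>"

definition Clk_act :: "('c \<rightharpoonup> 'o) \<Rightarrow> ('c \<rightharpoonup> 'o) \<Rightarrow> ('c \<Rightarrow> 'c) \<Rightarrow> 'c \<Rightarrow> 'c" where
  "Clk_act \<theta> \<theta>' \<sigma> l = \<sigma> l"

definition prod_psh where
  "prod_psh G1 G2 \<theta> = G1 \<theta> \<times> G2 \<theta>"

definition prod_act where
  "prod_act act1 act2 \<theta> \<theta>' \<sigma> p = (act1 \<theta> \<theta>' \<sigma> (fst p), act2 \<theta> \<theta>' \<sigma> (snd p))"

definition nat_morphism ::
  "(('c \<rightharpoonup> 'o::order) \<Rightarrow> 'g set) \<Rightarrow> (('c \<rightharpoonup> 'o) \<Rightarrow> ('c \<rightharpoonup> 'o) \<Rightarrow> ('c \<Rightarrow> 'c) \<Rightarrow> 'g \<Rightarrow> 'g)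
   \<Rightarrow> (('c \<rightharpoonup> 'o) \<Rightarrow> 'g \<Rightarrow> nat) \<Rightarrow> bool" where
  "nat_morphism G act n \<longleftrightarrow>
     (\<forall>\<theta> \<theta>' \<sigma> g. mor \<theta> \<theta>' \<sigma> \<longrightarrow> g \<in> G \<theta> \<longrightarrow> n \<theta>' (act \<theta> \<theta>' \<sigma> g) = n \<theta> g)"

text \<open>Ordinal comparison alpha < n for a natural number n (a finite ordinal):
  the initial segment below alpha is finite with fewer than n elements.\<close>
definition ord_less_nat :: "'o::wellorder \<Rightarrow> nat \<Rightarrow> bool" where
  "ord_less_nat \<alpha> n \<longleftrightarrow> finite {\<beta>. \<beta> < \<alpha>} \<and> card {\<beta>. \<beta> < \<alpha>} < n"

end

theory Submission
  imports Defs
begin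


lemma psh_mem: assumes "presheaf G act" "mor t t' s" "g \<in> G t" shows "act t t' s g \<in> G t'"
proof -
  have "\<forall>\<theta> \<theta>' \<sigma> g. mor \<theta> \<theta>' \<sigma> \<longrightarrow> g \<in> G \<theta> \<longrightarrow> act \<theta> \<theta>' \<sigma> g \<in> G \<theta>'"
    using assms(1) unfolding presheaf_def by (rule conjunct1)
  then show ?thesis using assms(2,3) by blast
qed
lemma psh_comp: assumes "presheaf G act" "mor t t' s" "mor t' t'' u" "g \<in> G t"
  shows "act t t'' (u \<circ> s) g = act t' t'' u (act t t' s g)"
proof -
  have "\<forall>\<theta> \<theta>' \<theta>'' \<sigma> \<tau> g. mor \<theta> \<theta>' \<sigma> \<longrightarrow> mor \<theta>' \<theta>'' \<tau> \<longrightarrow> g \<in> G \<theta> \<longrightarrow>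
        act \<theta> \<theta>'' (\<tau> \<circ> \<sigma>) g = act \<theta>' \<theta>'' \<tau> (act \<theta> \<theta>' \<sigma> g)"
    using assms(1) unfolding presheaf_def by (elim conjE)
  then show ?thesis using assms(2,3,4) by blast
qed
lemma pso_mem: assumes "presheaf_over G act X xact" "mor t t' s" "g \<in> G t" "x \<in> X t g"
  shows "xact t t' s g x \<in> X t' (act t t' s g)"
proof -
  have "\<forall>\<theta> \<theta>' \<sigma> g x. mor \<theta> \<theta>' \<sigma> \<longrightarrow> g \<in> G \<theta> \<longrightarrow> x \<in> X \<theta> g \<longrightarrow>
        xact \<theta> \<theta>' \<sigma> g x \<in> X \<theta>' (act \<theta> \<theta>' \<sigma> g)"
    using assms(1) unfolding presheaf_over_def by (rule conjunct1)
  then show ?thesis using assms(2,3,4) by blast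
qed
lemma pso_comp: assumes "presheaf_over G act X xact" "mor t t' s" "mor t' t'' u" "g \<in> G t" "x \<in> X t g"
  shows "xact t t'' (u \<circ> s) g x = xact t' t'' u (act t t' s g) (xact t t' s g x)"
proof -
  have "\<forall>\<theta> \<theta>' \<theta>'' \<sigma> \<tau> g x. mor \<theta> \<theta>' \<sigma> \<longrightarrow> mor \<theta>' \<theta>'' \<tau> \<longrightarrow> g \<in> G \<theta> \<longrightarrow> x \<in> X \<theta> g \<longrightarrow>
        xact \<theta> \<theta>'' (\<tau> \<circ> \<sigma>) g x = xact \<theta>' \<theta>'' \<tau> (act \<theta> \<theta>' \<sigma> g) (xact \<theta> \<theta>' \<sigma> g x)"
    using assms(1) unfolding presheaf_over_def by (elim conjE)
  then show ?thesis using assms(2-5) by blast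
qed
lemma ci_bij: assumes "clock_invariant G act X xact" "obj t" "g \<in> G t" "l \<notin> dom t"
  shows "bij_betw (xact t (t(l \<mapsto> a)) id g) (X t g) (X (t(l \<mapsto> a)) (act t (t(l \<mapsto> a)) id g))"
  using assms(1) unfolding clock_invariant_def using assms(2-4) by blast
lemma nm: assumes "nat_morphism G act n" "mor t t' s" "g \<in> G t" shows "n t' (act t t' s g) = n t g"
  using assms(1) unfolding nat_morphism_def using assms(2-3) by blast

lemma ex_not_less_nat:
  fixes N :: nat
  shows "\<exists>b::'o::{wellorder,no_top}. \<not> ord_less_nat b N"
proof -
  have "\<exists>b::'o. infinite {x. x < b} \<or> card {x. x < b} \<ge> k" for k
  proof (induction k)
    case 0 then show ?case by simp
  next
    case (Suc k)
    then obtain b :: 'o where b: "infinite {x. x < b} \<or> card {x. x < b} \<ge> k" by blast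
    obtain b' :: 'o where b': "b < b'" using gt_ex by blast
    have sub: "insert b {x. x < b} \<subseteq> {x. x < b'}" using b' by auto
    show ?case
    proof (cases "finite {x. x < b'}")
      case True
      have "{x. x < b} \<subseteq> {x. x < b'}" using sub by blast
      then have f: "finite {x. x < b}" using True by (rule finite_subset)
      have c1: "card (insert b {x. x < b}) \<le> card {x. x < b'}" using card_mono[OF True sub] .
      have c2: "card (insert b {x. x < b}) = Suc (card {x. x < b})" using f by simp
      have "k \<le> card {x. x < b}" using b f by simp
      then have "Suc k \<le> card {x. x < b'}" using c1 c2 by linarith
      then show ?thesis by blast
    next
      case False then show ?thesis by blast
    qed
  qed
  then obtain b :: 'o where b: "infinite {x. x < b} \<or> card {x. x < b} \<ge> N" by blast
  have "\<not> ord_less_nat b N"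
  proof
    assume "ord_less_nat b N"
    then have "finite {x. x < b}" "card {x. x < b} < N" unfolding ord_less_nat_def by simp_all
    then show False using b by simp
  qed
  then show ?thesis by blast
qed

theorem mainTheorem6:
  fixes G :: "('c::countable \<rightharpoonup> 'o::{wellorder,no_top}) \<Rightarrow> 'g set"
    and act :: "('c \<rightharpoonup> 'o) \<Rightarrow> ('c \<rightharpoonup> 'o) \<Rightarrow> ('c \<Rightarrow> 'c) \<Rightarrow> 'g \<Rightarrow> 'g"
    and X :: "('c \<rightharpoonup> 'o) \<Rightarrow> 'g \<Rightarrow> 'x set"
    and xact :: "('c \<rightharpoonup> 'o) \<Rightarrow> ('c \<rightharpoonup> 'o) \<Rightarrow> ('c \<Rightarrow> 'c) \<Rightarrow> 'g \<Rightarrow> 'x \<Rightarrow> 'x"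
    and \<phi> :: "('c \<rightharpoonup> 'o) \<Rightarrow> (('g \<times> 'x) \<times> 'c) \<Rightarrow> unit set"
    and n :: "('c \<rightharpoonup> 'o) \<Rightarrow> 'g \<Rightarrow> nat"
    and fresh :: "'c set \<Rightarrow> 'c"
    and \<theta> :: "'c \<rightharpoonup> 'o"
    and \<gamma> :: 'g
  assumes clocks_inf: "infinite (UNIV :: 'c set)"
    and fresh: "\<And>E. finite E \<Longrightarrow> fresh E \<notin> E"
    and G: "presheaf G act"
    and X: "family G act X xact"
    and phi: "predicate (prod_psh (compr G X) Clk) (prod_act (compr_act act xact) Clk_act) \<phi>"
    and n: "nat_morphism G act n"
    and uniq: "\<And>\<theta> g x y l. obj \<theta> \<Longrightarrow> g \<in> G \<theta> \<Longrightarrow> x \<in> X \<theta> g \<Longrightarrow> y \<in> X \<theta> g \<Longrightarrow> l \<in> dom \<theta> \<Longrightarrow>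
        () \<in> \<phi> \<theta> ((g, x), l) \<Longrightarrow> () \<in> \<phi> \<theta> ((g, y), l) \<Longrightarrow>
        x = y \<or> ord_less_nat (the (\<theta> l)) (n \<theta> g)"
    and obj: "obj \<theta>"
    and \<gamma>: "\<gamma> \<in> G \<theta>"
  shows "(\<exists>x \<in> X \<theta> \<gamma>. \<forall>\<alpha>.
            () \<in> \<phi> (\<theta>(fresh (dom \<theta>) \<mapsto> \<alpha>))
                 ((act \<theta> (\<theta>(fresh (dom \<theta>) \<mapsto> \<alpha>)) id \<gamma>,
                   xact \<theta> (\<theta>(fresh (dom \<theta>) \<mapsto> \<alpha>)) id \<gamma> x), fresh (dom \<theta>)))
         \<longleftrightarrow>
         (\<forall>\<alpha>. \<exists>x \<in> X (\<theta>(fresh (dom \<theta>) \<mapsto> \<alpha>)) (act \<theta> (\<theta>(fresh (dom \<theta>) \<mapsto> \<alpha>)) id \<gamma>).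
            () \<in> \<phi> (\<theta>(fresh (dom \<theta>) \<mapsto> \<alpha>))
                 ((act \<theta> (\<theta>(fresh (dom \<theta>) \<mapsto> \<alpha>)) id \<gamma>, x), fresh (dom \<theta>)))"
proof -
  define l where "l = fresh (dom \<theta>)"
  have fin: "finite (dom \<theta>)" using obj by (simp add: obj_def)
  have l: "l \<notin> dom \<theta>" using fresh[OF fin] by (simp add: l_def)
  have objT: "obj (\<theta>(l \<mapsto> a))" for a using fin by (simp add: obj_def)
  have m1: "mor \<theta> (\<theta>(l \<mapsto> a)) id" for a
    using obj objT l unfolding mor_def by auto
  have m2: "mor (\<theta>(l \<mapsto> a)) (\<theta>(l \<mapsto> b)) id" if "b \<le> a" for a b
    using objT that unfolding mor_def by auto
  have Gc: "act (\<theta>(l \<mapsto> a)) (\<theta>(l \<mapsto> b)) id (act \<theta> (\<theta>(l \<mapsto> a)) id \<gamma>) = act \<theta> (\<theta>(l \<mapsto> b)) id \<gamma>"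
    if "b \<le> a" for a b
    using psh_comp[OF G m1[of a] m2[OF that] \<gamma>] by simp
  have XP: "presheaf_over G act X xact" and XI: "clock_invariant G act X xact"
    using X by (auto simp: family_def)
  have Xc: "xact (\<theta>(l \<mapsto> a)) (\<theta>(l \<mapsto> b)) id (act \<theta> (\<theta>(l \<mapsto> a)) id \<gamma>) (xact \<theta> (\<theta>(l \<mapsto> a)) id \<gamma> y)
      = xact \<theta> (\<theta>(l \<mapsto> b)) id \<gamma> y"
    if "b \<le> a" "y \<in> X \<theta> \<gamma>" for a b y
    using pso_comp[OF XP m1[of a] m2[OF that(1)] \<gamma> that(2)] by simp
  have Gin: "act \<theta> (\<theta>(l \<mapsto> a)) id \<gamma> \<in> G (\<theta>(l \<mapsto> a))" for a
    by (rule psh_mem[OF G m1[of a] \<gamma>])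
  have Xin: "xact \<theta> (\<theta>(l \<mapsto> a)) id \<gamma> y \<in> X (\<theta>(l \<mapsto> a)) (act \<theta> (\<theta>(l \<mapsto> a)) id \<gamma>)"
    if "y \<in> X \<theta> \<gamma>" for a y
    by (rule pso_mem[OF XP m1[of a] \<gamma> that])
  have bij: "bij_betw (xact \<theta> (\<theta>(l \<mapsto> a)) id \<gamma>) (X \<theta> \<gamma>) (X (\<theta>(l \<mapsto> a)) (act \<theta> (\<theta>(l \<mapsto> a)) id \<gamma>))" for a
    by (rule ci_bij[OF XI obj \<gamma> l])
  have PP: "presheaf_over (prod_psh (compr G X) Clk) (prod_act (compr_act act xact) Clk_act) \<phi> (\<lambda>_ _ _ _ _. ())"
    using phi by (simp add: predicate_def family_def)
  have restr: "() \<in> \<phi> (\<theta>(l \<mapsto> b)) ((act \<theta> (\<theta>(l \<mapsto> b)) id \<gamma>, xact \<theta> (\<theta>(l \<mapsto> b)) id \<gamma> y), l)"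
    if "b \<le> a" "y \<in> X \<theta> \<gamma>" "() \<in> \<phi> (\<theta>(l \<mapsto> a)) ((act \<theta> (\<theta>(l \<mapsto> a)) id \<gamma>, xact \<theta> (\<theta>(l \<mapsto> a)) id \<gamma> y), l)"
    for a b y
  proof -
    have mem: "((act \<theta> (\<theta>(l \<mapsto> a)) id \<gamma>, xact \<theta> (\<theta>(l \<mapsto> a)) id \<gamma> y), l) \<in> prod_psh (compr G X) Clk (\<theta>(l \<mapsto> a))"
      using Gin Xin[OF that(2)] by (simp add: prod_psh_def compr_def Clk_def)
    then have "() \<in> \<phi> (\<theta>(l \<mapsto> b)) (prod_act (compr_act act xact) Clk_act (\<theta>(l \<mapsto> a)) (\<theta>(l \<mapsto> b)) id
                 ((act \<theta> (\<theta>(l \<mapsto> a)) id \<gamma>, xact \<theta> (\<theta>(l \<mapsto> a)) id \<gamma> y), l))"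
      using pso_mem[where G="prod_psh (compr G X) Clk" and X=\<phi>, OF PP m2[OF that(1)] mem that(3)] by simp
    then show ?thesis
      using Gc[OF that(1)] Xc[OF that(1,2)] by (simp add: prod_act_def compr_act_def Clk_act_def)
  qed
  have nn: "n (\<theta>(l \<mapsto> a)) (act \<theta> (\<theta>(l \<mapsto> a)) id \<gamma>) = n \<theta> \<gamma>" for a
    using nm[OF n m1 \<gamma>] .
  show ?thesis unfolding l_def[symmetric]
  proof
    assume "\<exists>x \<in> X \<theta> \<gamma>. \<forall>\<alpha>. () \<in> \<phi> (\<theta>(l \<mapsto> \<alpha>)) ((act \<theta> (\<theta>(l \<mapsto> \<alpha>)) id \<gamma>, xact \<theta> (\<theta>(l \<mapsto> \<alpha>)) id \<gamma> x), l)"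
    then show "\<forall>\<alpha>. \<exists>x \<in> X (\<theta>(l \<mapsto> \<alpha>)) (act \<theta> (\<theta>(l \<mapsto> \<alpha>)) id \<gamma>). () \<in> \<phi> (\<theta>(l \<mapsto> \<alpha>)) ((act \<theta> (\<theta>(l \<mapsto> \<alpha>)) id \<gamma>, x), l)"
      using Xin by blast
  next
    assume B: "\<forall>\<alpha>. \<exists>x \<in> X (\<theta>(l \<mapsto> \<alpha>)) (act \<theta> (\<theta>(l \<mapsto> \<alpha>)) id \<gamma>). () \<in> \<phi> (\<theta>(l \<mapsto> \<alpha>)) ((act \<theta> (\<theta>(l \<mapsto> \<alpha>)) id \<gamma>, x), l)"
    have "\<exists>y \<in> X \<theta> \<gamma>. () \<in> \<phi> (\<theta>(l \<mapsto> a)) ((act \<theta> (\<theta>(l \<mapsto> a)) id \<gamma>, xact \<theta> (\<theta>(l \<mapsto> a)) id \<gamma> y), l)" for a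
    proof -
      obtain x where x: "x \<in> X (\<theta>(l \<mapsto> a)) (act \<theta> (\<theta>(l \<mapsto> a)) id \<gamma>)"
        "() \<in> \<phi> (\<theta>(l \<mapsto> a)) ((act \<theta> (\<theta>(l \<mapsto> a)) id \<gamma>, x), l)" using B by blast
      have "x \<in> xact \<theta> (\<theta>(l \<mapsto> a)) id \<gamma> ` X \<theta> \<gamma>"
        using x(1) bij_betw_imp_surj_on[OF bij[of a]] by simp
      then obtain y where "y \<in> X \<theta> \<gamma>" "x = xact \<theta> (\<theta>(l \<mapsto> a)) id \<gamma> y"
        by (rule imageE) simp
      then show ?thesis using x by blast
    qed
    then have "\<forall>a. \<exists>y. y \<in> X \<theta> \<gamma> \<and> () \<in> \<phi> (\<theta>(l \<mapsto> a)) ((act \<theta> (\<theta>(l \<mapsto> a)) id \<gamma>, xact \<theta> (\<theta>(l \<mapsto> a)) id \<gamma> y), l)"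
      by blast
    from choice[OF this] obtain Y where Y0: "\<forall>a. Y a \<in> X \<theta> \<gamma> \<and> () \<in> \<phi> (\<theta>(l \<mapsto> a)) ((act \<theta> (\<theta>(l \<mapsto> a)) id \<gamma>, xact \<theta> (\<theta>(l \<mapsto> a)) id \<gamma> (Y a)), l)"
      by blast
    have Y: "\<And>a. Y a \<in> X \<theta> \<gamma>"
      "\<And>a. () \<in> \<phi> (\<theta>(l \<mapsto> a)) ((act \<theta> (\<theta>(l \<mapsto> a)) id \<gamma>, xact \<theta> (\<theta>(l \<mapsto> a)) id \<gamma> (Y a)), l)"
      using Y0 by simp_all
    obtain b0 :: 'o where b0: "\<not> ord_less_nat b0 (n \<theta> \<gamma>)" using ex_not_less_nat by blast
    have eq: "Y a = Y b0" if "b0 \<le> a" for a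
    proof -
      have p1: "() \<in> \<phi> (\<theta>(l \<mapsto> b0)) ((act \<theta> (\<theta>(l \<mapsto> b0)) id \<gamma>, xact \<theta> (\<theta>(l \<mapsto> b0)) id \<gamma> (Y a)), l)"
        using restr[OF that Y(1) Y(2)] .
      have "xact \<theta> (\<theta>(l \<mapsto> b0)) id \<gamma> (Y a) = xact \<theta> (\<theta>(l \<mapsto> b0)) id \<gamma> (Y b0)
            \<or> ord_less_nat (the ((\<theta>(l \<mapsto> b0)) l)) (n (\<theta>(l \<mapsto> b0)) (act \<theta> (\<theta>(l \<mapsto> b0)) id \<gamma>))"
        by (rule uniq[OF objT Gin Xin[OF Y(1)] Xin[OF Y(1)] _ p1 Y(2)]) simp
      then have "xact \<theta> (\<theta>(l \<mapsto> b0)) id \<gamma> (Y a) = xact \<theta> (\<theta>(l \<mapsto> b0)) id \<gamma> (Y b0)"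
        using b0 nn by simp
      then show ?thesis using inj_onD[OF bij_betw_imp_inj_on[OF bij[of b0]] _ Y(1) Y(1)] by blast
    qed
    show "\<exists>x \<in> X \<theta> \<gamma>. \<forall>\<alpha>. () \<in> \<phi> (\<theta>(l \<mapsto> \<alpha>)) ((act \<theta> (\<theta>(l \<mapsto> \<alpha>)) id \<gamma>, xact \<theta> (\<theta>(l \<mapsto> \<alpha>)) id \<gamma> x), l)"
    proof (intro bexI[of _ "Y b0"] allI)
      fix a
      have "Y (max a b0) = Y b0" by (rule eq) simp
      moreover have "() \<in> \<phi> (\<theta>(l \<mapsto> a)) ((act \<theta> (\<theta>(l \<mapsto> a)) id \<gamma>, xact \<theta> (\<theta>(l \<mapsto> a)) id \<gamma> (Y (max a b0))), l)"
        by (rule restr[OF _ Y(1) Y(2)]) simp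
      ultimately show "() \<in> \<phi> (\<theta>(l \<mapsto> a)) ((act \<theta> (\<theta>(l \<mapsto> a)) id \<gamma>, xact \<theta> (\<theta>(l \<mapsto> a)) id \<gamma> (Y b0)), l)"
        by simp
    qed (rule Y(1))
  qed
qed


end
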